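(* Let $M$ be a tame paving matroid of rank $n$ on $[d]$ with set of dependent hyperplanes $\mathcal{L}$. Then for every $\gamma\in V_{\mathcal{C}(M)}$ and every $\epsilon>0$ there exists $\widetilde\gamma=(\widetilde\gamma_1,\ldots,\widetilde\gamma_d)\in V_{\mathcal{C}(M)}$ with $\|\gamma_p-\widetilde\gamma_p\|<\epsilon$ for all $p\in[d]$ such that $\dim\widetilde\gamma_l=n-1$ for every $l\in\mathcal{L}$, where $\widetilde\gamma_l=\operatorname{span}(\widetilde\gamma_p:p\in l)$.
   Context: A matroid of rank $n$ is paving if every circuit has size $n$ or $n+1$; a dependent hyperplane is a maximal subset of size at least $n$ all of whose $n$-subsets are circuits; tame means any three distinct dependent hyperplanes have empty intersection. The circuit variety $V_{\mathcal{C}(M)}$ is the set of tuples $(\gamma_1,\ldots,\gamma_d)$ of vectors in $\mathbb{C}^n$ such that $(\gamma_p)_{p\in S}$ is linearly dependent for every dependent set $S$ of $M$. *)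

theory Defs
  imports "HOL-Analysis.Analysis"
begin

definition matroid :: "'a set \<Rightarrow> 'a set set \<Rightarrow> bool" where
  "matroid E Ind \<longleftrightarrow> finite E \<and> Ind \<subseteq> Pow E \<and> {} \<in> Ind \<and>
     (\<forall>X Y. X \<in> Ind \<and> Y \<subseteq> X \<longrightarrow> Y \<in> Ind) \<and>
     (\<forall>X Y. X \<in> Ind \<and> Y \<in> Ind \<and> card X < card Y \<longrightarrow> (\<exists>y\<in>Y - X. insert y X \<in> Ind))"

definition matroid_rank :: "'a set set \<Rightarrow> nat" where
  "matroid_rank Ind = Max (card ` Ind)"

definition dependent_set :: "'a set \<Rightarrow> 'a set set \<Rightarrow> 'a set \<Rightarrow> bool" where
  "dependent_set E Ind S \<longleftrightarrow> S \<subseteq> E \<and> S \<notin> Ind"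

definition circuit :: "'a set \<Rightarrow> 'a set set \<Rightarrow> 'a set \<Rightarrow> bool" where
  "circuit E Ind C \<longleftrightarrow> dependent_set E Ind C \<and> (\<forall>D. D \<subset> C \<longrightarrow> D \<in> Ind)"

definition paving :: "'a set \<Rightarrow> 'a set set \<Rightarrow> bool" where
  "paving E Ind \<longleftrightarrow> (\<forall>C. circuit E Ind C \<longrightarrow>
      card C = matroid_rank Ind \<or> card C = matroid_rank Ind + 1)"

definition hyp_candidate :: "'a set \<Rightarrow> 'a set set \<Rightarrow> 'a set \<Rightarrow> bool" where
  "hyp_candidate E Ind H \<longleftrightarrow> H \<subseteq> E \<and> card H \<ge> matroid_rank Ind \<and>
     (\<forall>S. S \<subseteq> H \<and> card S = matroid_rank Ind \<longrightarrow> circuit E Ind S)"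

definition dependent_hyperplane :: "'a set \<Rightarrow> 'a set set \<Rightarrow> 'a set \<Rightarrow> bool" where
  "dependent_hyperplane E Ind H \<longleftrightarrow> hyp_candidate E Ind H \<and>
     (\<forall>H'. hyp_candidate E Ind H' \<and> H \<subseteq> H' \<longrightarrow> H' = H)"

definition tame :: "'a set \<Rightarrow> 'a set set \<Rightarrow> bool" where
  "tame E Ind \<longleftrightarrow> (\<forall>H1 H2 H3. dependent_hyperplane E Ind H1 \<and> dependent_hyperplane E Ind H2 \<and>
      dependent_hyperplane E Ind H3 \<and> H1 \<noteq> H2 \<and> H1 \<noteq> H3 \<and> H2 \<noteq> H3 \<longrightarrow> H1 \<inter> H2 \<inter> H3 = {})"

definition lin_dep_family :: "('a \<Rightarrow> complex ^ 'n) \<Rightarrow> 'a set \<Rightarrow> bool" where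
  "lin_dep_family \<gamma> S \<longleftrightarrow> (\<exists>c :: 'a \<Rightarrow> complex. (\<exists>p\<in>S. c p \<noteq> 0) \<and> (\<Sum>p\<in>S. c p *s \<gamma> p) = 0)"

text \<open>Circuit variety: tuples indexed by the ground set (values outside E irrelevant).\<close>
definition circuit_variety :: "'a set \<Rightarrow> 'a set set \<Rightarrow> ('a \<Rightarrow> complex ^ 'n) set" where
  "circuit_variety E Ind = {\<gamma>. \<forall>S. dependent_set E Ind S \<longrightarrow> lin_dep_family \<gamma> S}"

end

theory Submission
  imports Defs
begin

lemma ind_sub: "matroid E Ind \<Longrightarrow> X \<in> Ind \<Longrightarrow> X \<subseteq> E \<and> finite X"
  unfolding matroid_def by (meson PowD finite_subset subsetD)

lemma dep_has_circuit:
  assumes "matroid E Ind" "dependent_set E Ind S"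
  shows "\<exists>C\<subseteq>S. circuit E Ind C"
proof -
  let ?P = "\<lambda>C. C \<subseteq> S \<and> C \<notin> Ind"
  have "?P S" using assms unfolding dependent_set_def by auto
  then obtain C where C: "?P C" "\<And>D. ?P D \<Longrightarrow> card C \<le> card D"
    using ex_has_least_nat[of ?P S card] by blast
  have fS: "finite S" using assms unfolding dependent_set_def matroid_def by (meson finite_subset)
  have "circuit E Ind C"
    unfolding circuit_def dependent_set_def
  proof (intro conjI allI impI)
    show "C \<subseteq> E" using C assms unfolding dependent_set_def by auto
    show "C \<notin> Ind" using C by auto
    fix D assume "D \<subset> C"
    then have "card D < card C" using fS C(1) by (meson finite_subset psubset_card_mono)
    then show "D \<in> Ind" using C(2)[of D] \<open>D \<subset> C\<close> C(1) by fastforce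
  qed
  then show ?thesis using C by auto
qed

lemma card_ind_le_rank:
  assumes "matroid E Ind" "X \<in> Ind" shows "card X \<le> matroid_rank Ind"
proof -
  have "finite Ind" using assms unfolding matroid_def
    by (meson finite_Pow_iff finite_subset)
  then show ?thesis unfolding matroid_rank_def using assms by auto
qed

lemma small_dep_is_circuit:
  assumes "matroid E Ind" "paving E Ind" "dependent_set E Ind S" "card S \<le> matroid_rank Ind"
  shows "circuit E Ind S \<and> card S = matroid_rank Ind"
proof -
  obtain C where C: "C \<subseteq> S" "circuit E Ind C" using dep_has_circuit assms by blast
  have fS: "finite S" using assms unfolding dependent_set_def matroid_def by (meson finite_subset)
  have "card C \<ge> matroid_rank Ind" using assms(2) C unfolding paving_def by fastforce
  moreover have "card C \<le> card S" using C fS card_mono by blast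
  ultimately have "C = S" using C fS assms(4) by (metis card_subset_eq le_antisym order.trans)
  then show ?thesis using C \<open>card C \<ge> _\<close> assms(4) by auto
qed

lemma circuit_in_hyp:
  assumes "matroid E Ind" "circuit E Ind C" "card C = matroid_rank Ind"
  shows "\<exists>L. dependent_hyperplane E Ind L \<and> C \<subseteq> L"
proof -
  have fE: "finite E" using assms unfolding matroid_def by auto
  have CE: "C \<subseteq> E" using assms unfolding circuit_def dependent_set_def by auto
  let ?P = "\<lambda>H. hyp_candidate E Ind H \<and> C \<subseteq> H"
  have PC: "?P C" unfolding hyp_candidate_def
  proof (intro conjI allI impI)
    fix S assume "S \<subseteq> C \<and> card S = matroid_rank Ind"
    then have "S = C" using assms fE CE by (metis card_subset_eq finite_subset)
    then show "circuit E Ind S" using assms by auto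
  qed (use CE assms in auto)
  have bound: "\<And>H. ?P H \<Longrightarrow> card H \<le> card E" using fE unfolding hyp_candidate_def
    by (simp add: card_mono)
  obtain H where H: "?P H" "\<And>H'. ?P H' \<Longrightarrow> card H' \<le> card H"
  proof -
    have "\<exists>H. ?P H \<and> (\<forall>H'. ?P H' \<longrightarrow> card H' \<le> card H)"
      apply (rule ex_has_greatest_nat[of ?P C card "card E + 1"])
      using PC bound by (auto simp: less_Suc_eq_le)
    then show ?thesis using that by blast
  qed
  have "dependent_hyperplane E Ind H" unfolding dependent_hyperplane_def
  proof (intro conjI allI impI)
    show "hyp_candidate E Ind H" using H by auto
    fix H' assume H': "hyp_candidate E Ind H' \<and> H \<subseteq> H'"
    then have "?P H'" using H by auto
    then have "card H' \<le> card H" using H by auto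
    moreover have "finite H'" using H' fE unfolding hyp_candidate_def by (meson finite_subset)
    ultimately show "H' = H" using H' by (metis card_seteq)
  qed
  then show ?thesis using H by auto
qed

lemma finite_hyps:
  assumes "matroid E Ind" shows "finite {L. dependent_hyperplane E Ind L}"
proof -
  have "{L. dependent_hyperplane E Ind L} \<subseteq> Pow E"
    unfolding dependent_hyperplane_def hyp_candidate_def by auto
  then show ?thesis using assms unfolding matroid_def by (meson finite_Pow_iff finite_subset)
qed

lemma lin_dep_noninj:
  fixes g :: "'a \<Rightarrow> complex ^ 'n"
  assumes "finite T" "\<not> inj_on g T"
  shows "lin_dep_family g T"
proof -
  obtain p q where pq: "p \<in> T" "q \<in> T" "p \<noteq> q" "g p = g q" using assms unfolding inj_on_def by auto
  define c where "c = (\<lambda>x. if x = p then (1::complex) else if x = q then -1 else 0)"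
  have "(\<Sum>x\<in>T. c x *s g x) = (\<Sum>x\<in>{p,q}. c x *s g x)"
    by (rule sum.mono_neutral_right) (use assms pq in \<open>auto simp: c_def\<close>)
  also have "\<dots> = 0" using pq by (simp add: c_def)
  finally show ?thesis unfolding lin_dep_family_def using pq by (auto simp: c_def intro!: exI[of _ c])
qed

lemma lin_dep_of_dep:
  fixes g :: "'a \<Rightarrow> complex ^ 'n"
  assumes "finite T" "inj_on g T" "vec.dependent (g ` T)"
  shows "lin_dep_family g T"
proof -
  obtain u where u: "\<exists>v\<in>g ` T. u v \<noteq> 0" "(\<Sum>v\<in>g ` T. u v *s v) = 0"
    using assms vec.dependent_finite[of "g ` T"] by auto
  have "(\<Sum>p\<in>T. u (g p) *s g p) = 0" using u(2) sum.reindex[OF assms(2), of "\<lambda>v. u v *s v"] by simp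
  then show ?thesis unfolding lin_dep_family_def using u(1) by (auto intro!: exI[of _ "u \<circ> g"])
qed

lemma dep_of_lin_dep:
  fixes g :: "'a \<Rightarrow> complex ^ 'n"
  assumes "finite T" "inj_on g T" "lin_dep_family g T"
  shows "vec.dependent (g ` T)"
proof -
  obtain c where c: "\<exists>p\<in>T. c p \<noteq> 0" "(\<Sum>p\<in>T. c p *s g p) = 0"
    using assms unfolding lin_dep_family_def by auto
  define u where "u = c \<circ> inv_into T g"
  have "(\<Sum>v\<in>g ` T. u v *s v) = (\<Sum>p\<in>T. u (g p) *s g p)"
    using sum.reindex[OF assms(2), of "\<lambda>v. u v *s v"] by simp
  also have "\<dots> = (\<Sum>p\<in>T. c p *s g p)"
    using assms(2) by (intro sum.cong) (auto simp: u_def)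
  finally have "(\<Sum>v\<in>g ` T. u v *s v) = 0" using c by simp
  moreover have "\<exists>v\<in>g ` T. u v \<noteq> 0" using c assms(2) by (auto simp: u_def)
  ultimately show ?thesis using vec.dependent_finite[of "g ` T"] assms(1) by auto
qed

lemma lin_dep_big:
  fixes g :: "'a \<Rightarrow> complex ^ 'n"
  assumes "finite T" "g ` T \<subseteq> H" "card T > vec.dim H"
  shows "lin_dep_family g T"
proof (cases "inj_on g T")
  case True
  have "vec.dependent (g ` T)"
  proof (rule ccontr)
    assume "\<not> vec.dependent (g ` T)"
    then have "card (g ` T) \<le> vec.dim H" using vec.independent_card_le_dim assms(2) by blast
    then show False using card_image[OF True] assms(3) by simp
  qed
  then show ?thesis using lin_dep_of_dep True assms by blast
next
  case False then show ?thesis using lin_dep_noninj assms by blast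
qed

lemma dim_univ: "vec.dim (UNIV :: (complex ^ 'n) set) = CARD('n)"
  by (simp add: card_cart_basis)

lemma variety_intro:
  fixes g :: "nat \<Rightarrow> complex ^ 'n"
  assumes M: "matroid E Ind" and P: "paving E Ind" and R: "matroid_rank Ind = CARD('n)"
    and H: "\<And>L. dependent_hyperplane E Ind L \<Longrightarrow> \<exists>H. vec.dim H \<le> CARD('n) - 1 \<and> g ` L \<subseteq> H"
  shows "g \<in> circuit_variety E Ind"
  unfolding circuit_variety_def
proof (intro CollectI allI impI)
  fix T assume T: "dependent_set E Ind T"
  have fT: "finite T" using T M unfolding dependent_set_def matroid_def by (meson finite_subset)
  show "lin_dep_family g T"
  proof (cases "card T > CARD('n)")
    case True
    have "vec.dim (UNIV :: (complex ^ 'n) set) = CARD('n)" by (rule dim_univ)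
    then show ?thesis using lin_dep_big[of T g UNIV] fT True by auto
  next
    case False
    then have "card T \<le> matroid_rank Ind" using R by simp
    then have cT: "circuit E Ind T" "card T = matroid_rank Ind" using small_dep_is_circuit[OF M P T] by auto
    obtain L where L: "dependent_hyperplane E Ind L" "T \<subseteq> L" using circuit_in_hyp[OF M cT] by blast
    obtain Hs where Hs: "vec.dim Hs \<le> CARD('n) - 1" "g ` L \<subseteq> Hs" using H[OF L(1)] by blast
    have "g ` T \<subseteq> Hs" using Hs(2) L(2) by blast
    moreover have "CARD('n) > 0" by (rule zero_less_card_finite)
    then have "card T > vec.dim Hs" using Hs(1) cT(2) R by linarith
    ultimately show ?thesis using lin_dep_big[of T g Hs] fT by blast
  qed
qed

lemma hyp_subsets_dep:
  assumes "dependent_hyperplane E Ind L" "T \<subseteq> L" "card T = matroid_rank Ind"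
  shows "dependent_set E Ind T"
  using assms unfolding dependent_hyperplane_def hyp_candidate_def circuit_def by blast

lemma hyp_props:
  assumes "dependent_hyperplane E Ind L"
  shows "L \<subseteq> E" "card L \<ge> matroid_rank Ind"
  using assms unfolding dependent_hyperplane_def hyp_candidate_def by auto

lemma dim_hyp_le:
  fixes g :: "nat \<Rightarrow> complex ^ 'n"
  assumes M: "matroid E Ind" and R: "matroid_rank Ind = CARD('n)"
    and g: "g \<in> circuit_variety E Ind" and L: "dependent_hyperplane E Ind L"
  shows "vec.dim (g ` L) \<le> CARD('n) - 1"
proof (rule ccontr)
  assume "\<not> ?thesis"
  then have big: "vec.dim (g ` L) \<ge> CARD('n)" by linarith
  obtain B where B: "B \<subseteq> g ` L" "vec.independent B" "g ` L \<subseteq> vec.span B" "card B = vec.dim (g ` L)"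
    by (rule vec.basis_exists)
  obtain B' where B': "B' \<subseteq> B" "card B' = CARD('n)"
    using obtain_subset_with_card_n[of "CARD('n)" B] big B(4) by metis
  define T where "T = inv_into L g ` B'"
  have BL: "B' \<subseteq> g ` L" using B B' by auto
  have gT: "g ` T = B'"
  proof -
    have "\<And>x. x \<in> B' \<Longrightarrow> g (inv_into L g x) = x" using BL by (auto simp: f_inv_into_f)
    then have "(\<lambda>x. g (inv_into L g x)) ` B' = id ` B'" by (intro image_cong) auto
    then show ?thesis unfolding T_def image_image by simp
  qed
  have TL: "T \<subseteq> L" unfolding T_def using BL by (auto intro: inv_into_into)
  have injT: "inj_on g T"
  proof (rule inj_onI)
    fix x y assume "x \<in> T" "y \<in> T" "g x = g y"
    then obtain a b where ab: "a \<in> B'" "b \<in> B'" "x = inv_into L g a" "y = inv_into L g b"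
      unfolding T_def by blast
    then have "g x = a" "g y = b" using BL by (auto simp: f_inv_into_f)
    then show "x = y" using ab \<open>g x = g y\<close> by simp
  qed
  have cT: "card T = CARD('n)" using card_image[OF injT] gT B' by simp
  have "finite E" using M unfolding matroid_def by simp
  then have fL: "finite L" using hyp_props(1)[OF L] finite_subset by auto
  have fT: "finite T" using finite_subset[OF TL fL] .
  have "dependent_set E Ind T" using hyp_subsets_dep[OF L TL] cT R by simp
  then have "lin_dep_family g T" using g unfolding circuit_variety_def by auto
  then have "vec.dependent B'" using dep_of_lin_dep[OF fT injT] gT by simp
  then show False using B'(1) B(2) vec.independent_mono by blast
qed

lemma ext_subspace:
  fixes X :: "(complex ^ 'n) set"
  assumes "vec.dim X \<le> CARD('n) - 1"
  shows "\<exists>H. vec.subspace H \<and> vec.dim H = CARD('n) - 1 \<and> X \<subseteq> H"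
proof -
  obtain B where B: "B \<subseteq> X" "vec.independent B" "X \<subseteq> vec.span B" "card B = vec.dim X"
    by (rule vec.basis_exists)
  obtain C where C: "B \<subseteq> C" "vec.independent C" "UNIV \<subseteq> vec.span C"
    by (rule vec.maximal_independent_subset_extend[OF subset_UNIV B(2)])
  have fC: "finite C" using vec.finiteI_independent[OF C(2)] .
  have "card C = vec.dim (UNIV :: (complex ^ 'n) set)"
    by (rule vec.basis_card_eq_dim[OF subset_UNIV C(3) C(2)])
  then have cC: "card C = CARD('n)" using dim_univ[where 'n='n] by simp
  have fB: "finite B" using fC C(1) finite_subset by blast
  have "card (C - B) = card C - card B" using fB C(1) by (rule card_Diff_subset)
  then have "card (C - B) \<ge> CARD('n) - 1 - card B" using cC by simp
  then obtain D0 where D0: "D0 \<subseteq> C - B" "card D0 = CARD('n) - 1 - card B"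
    using obtain_subset_with_card_n by metis
  define D where "D = B \<union> D0"
  have fD0: "finite D0" using D0(1) fC finite_subset by blast
  have "B \<inter> D0 = {}" using D0(1) by blast
  then have "card D = card B + card D0" unfolding D_def using card_Un_disjoint[OF fB fD0] by blast
  then have cD: "card D = CARD('n) - 1" using D0(2) assms B(4) by simp
  have "D \<subseteq> C" using C(1) D0(1) unfolding D_def by blast
  then have iD: "vec.independent D" using C(2) vec.independent_mono by blast
  have "X \<subseteq> vec.span D" using B(3) vec.span_mono[of B D] unfolding D_def by blast
  moreover have "vec.dim (vec.span D) = CARD('n) - 1" using vec.dim_span_eq_card_independent[OF iD] cD by simp
  ultimately show ?thesis by blast
qed

lemma norm_smult_c:
  fixes x :: "complex ^ 'n"
  shows "norm (c *s x) = norm c * norm x"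
  unfolding norm_vec_def
  by (simp add: L2_set_right_distrib norm_mult)

lemma line_meets:
  fixes V :: "(complex ^ 'n) set"
  assumes V: "vec.subspace V" and nb: "\<not> (y0 \<in> V \<and> w \<in> V)"
  shows "finite {s::real. y0 + of_real s *s w \<in> V}"
proof -
  have uniq: "s1 = s2" if "y0 + of_real s1 *s w \<in> V" "y0 + of_real s2 *s w \<in> V" for s1 s2
  proof (rule ccontr)
    assume ne: "s1 \<noteq> s2"
    have "(y0 + of_real s1 *s w) - (y0 + of_real s2 *s w) \<in> V"
      using vec.subspace_diff[OF V that] .
    then have d: "(of_real s1 - of_real s2) *s w \<in> V" by (simp add: vector_sub_rdistrib)
    have nz: "(of_real s1 - of_real s2 :: complex) \<noteq> 0" using ne by simp
    have "inverse (of_real s1 - of_real s2 :: complex) *s ((of_real s1 - of_real s2) *s w) \<in> V"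
      using vec.subspace_scale[OF V d] .
    moreover have "inverse (of_real s1 - of_real s2 :: complex) *s ((of_real s1 - of_real s2) *s w) = w"
      unfolding vector_smult_assoc using nz by simp
    ultimately have wV: "w \<in> V" by simp
    have "(y0 + of_real s1 *s w) - of_real s1 *s w \<in> V"
      using vec.subspace_diff[OF V that(1) vec.subspace_scale[OF V wV]] .
    then have "y0 \<in> V" by simp
    then show False using nb wV by blast
  qed
  show ?thesis
  proof (cases "{s::real. y0 + of_real s *s w \<in> V} = {}")
    case True then show ?thesis by simp
  next
    case False
    then obtain s0 where "s0 \<in> {s::real. y0 + of_real s *s w \<in> V}" by blast
    then have "{s::real. y0 + of_real s *s w \<in> V} \<subseteq> {s0}" using uniq by blast
    then show ?thesis using finite_subset by blast
  qed
qed

lemma avoid: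
  fixes W :: "(complex ^ 'n) set"
  assumes "finite Vs" "\<forall>V\<in>Vs. vec.subspace V \<and> \<not> W \<subseteq> V" "vec.subspace W" "x \<in> W" "\<delta> > 0"
  shows "\<exists>y\<in>W. norm (y - x) < \<delta> \<and> (\<forall>V\<in>Vs. y \<notin> V)"
  using assms(1,2,5)
proof (induction Vs arbitrary: \<delta> rule: finite_induct)
  case empty
  then show ?case using assms(4) by (intro bexI[of _ x]) auto
next
  case (insert V Vs)
  have "\<delta>/2 > 0" using insert by simp
  then obtain y0 where y0: "y0 \<in> W" "norm (y0 - x) < \<delta>/2" "\<forall>V\<in>Vs. y0 \<notin> V"
    using insert.IH insert.prems(1) by blast
  obtain w where w: "w \<in> W" "w \<notin> V" using insert.prems(1) by blast
  define bad where "bad = (\<Union>V'\<in>insert V Vs. {s::real. y0 + of_real s *s w \<in> V'})"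
  have fin: "finite bad" unfolding bad_def
  proof (intro finite_UN_I insert.hyps(1)[THEN finite.insertI])
    fix V' assume V': "V' \<in> insert V Vs"
    have sV': "vec.subspace V'" using insert.prems(1) V' by blast
    have "\<not> (y0 \<in> V' \<and> w \<in> V')" using V' y0(3) w(2) by blast
    then show "finite {s::real. y0 + of_real s *s w \<in> V'}" using line_meets[OF sV'] by blast
  qed
  define r where "r = \<delta> / (2 * (norm w + 1))"
  have "2 * (norm w + 1) > (0::real)" by (smt (verit) norm_ge_zero)
  then have r0: "r > 0" unfolding r_def using insert.prems(2) divide_pos_pos by blast
  have "infinite {0<..<r}" using r0 by simp
  then obtain s where s: "s \<in> {0<..<r}" "s \<notin> bad"
    using fin by (meson finite_subset subsetI)
  define y where "y = y0 + of_real s *s w"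
  have yW: "y \<in> W" unfolding y_def using vec.subspace_add[OF assms(3) y0(1) vec.subspace_scale[OF assms(3) w(1)]] .
  have "norm (of_real s *s w) = s * norm w" using s(1) by (simp add: norm_smult_c)
  also have "\<dots> \<le> r * norm w" using s(1) by (simp add: mult_right_mono)
  also have "\<dots> < \<delta>/2"
  proof -
    have "r * norm w = \<delta> * norm w / (2 * (norm w + 1))" unfolding r_def by simp
    also have "\<dots> < \<delta> / 2" using insert.prems(2)
      by (simp add: divide_simps) (smt (verit) norm_ge_zero mult_left_mono)
    finally show ?thesis .
  qed
  finally have ns: "norm (of_real s *s w) < \<delta>/2" .
  have "norm (y - x) \<le> norm (y0 - x) + norm (of_real s *s w)"
    unfolding y_def by (metis add.commute add_diff_eq norm_triangle_ineq diff_add_eq)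
  then have "norm (y - x) < \<delta>" using y0(2) ns by simp
  moreover have "\<forall>V'\<in>insert V Vs. y \<notin> V'" using s(2) unfolding bad_def y_def by blast
  ultimately show ?case using yW by blast
qed

definition good :: "('a \<Rightarrow> complex ^ 'n) \<Rightarrow> 'a set \<Rightarrow> bool" where
  "good g L \<longleftrightarrow> (\<exists>S\<subseteq>L. card S = CARD('n) - 1 \<and> inj_on g S \<and> vec.independent (g ` S))"

lemma notin_span_other:
  fixes g :: "'a \<Rightarrow> complex ^ 'n"
  assumes "inj_on g S" "vec.independent (g ` S)" "q \<in> S"
  shows "g q \<notin> vec.span (g ` (S - {q}))"
proof -
  have "g ` (S - {q}) = g ` S - {g q}" using assms(1,3) by (auto simp: inj_on_def)
  moreover have "g q \<in> g ` S" using assms(3) by blast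
  ultimately show ?thesis using assms(2) unfolding vec.dependent_def by auto
qed

lemma exch:
  fixes g :: "'a \<Rightarrow> complex ^ 'n"
  assumes "inj_on g S" "vec.independent (g ` S)" "q \<in> S" "y \<notin> vec.span (g ` (S - {q}))"
  shows "inj_on (g(q:=y)) S \<and> vec.independent ((g(q:=y)) ` S)"
proof -
  have img: "(g(q:=y)) ` S = insert y (g ` (S - {q}))" using assms(3) by auto
  have i1: "vec.independent (g ` (S - {q}))" using assms(2) vec.independent_mono by (meson Diff_subset image_mono)
  have ind: "vec.independent ((g(q:=y)) ` S)" unfolding img
    using vec.independent_insertI[OF assms(4) i1] .
  have ynot: "y \<notin> g ` (S - {q})"
  proof
    assume "y \<in> g ` (S - {q})"
    then have "y \<in> vec.span (g ` (S - {q}))" by (rule vec.span_base)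
    then show False using assms(4) by simp
  qed
  have inj1: "inj_on (g(q:=y)) (S - {q})"
  proof -
    have "inj_on g (S - {q})" using inj_on_subset[OF assms(1) Diff_subset] .
    moreover have "inj_on (g(q:=y)) (S - {q}) = inj_on g (S - {q})" by (rule inj_on_cong) auto
    ultimately show ?thesis by simp
  qed
  have "inj_on (g(q:=y)) S"
  proof (rule inj_onI)
    fix x z assume xz: "x \<in> S" "z \<in> S" "(g(q:=y)) x = (g(q:=y)) z"
    show "x = z"
    proof (cases "x = q"; cases "z = q")
      assume "x = q" "z \<noteq> q"
      then have "y = g z" using xz by simp
      then show ?thesis using ynot xz(2) \<open>z \<noteq> q\<close> by blast
    next
      assume "x \<noteq> q" "z = q"
      then have "y = g x" using xz by simp
      then show ?thesis using ynot xz(1) \<open>x \<noteq> q\<close> by blast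
    next
      assume "x \<noteq> q" "z \<noteq> q"
      then show ?thesis using inj1 xz unfolding inj_on_def by auto
    qed simp
  qed
  then show ?thesis using ind by simp
qed

lemma greedy:
  fixes \<gamma> :: "'a \<Rightarrow> complex ^ 'n" and W :: "'a \<Rightarrow> (complex ^ 'n) set"
  assumes F: "finite F" "\<forall>L'\<in>F. good \<gamma> L'"
    and Wsub: "\<forall>q. vec.subspace (W q)" and Wg: "\<forall>q\<in>set qs. \<gamma> q \<in> W q"
    and Dq: "distinct qs"
    and Zs: "vec.subspace Z" and Z0: "qs \<noteq> [] \<Longrightarrow> \<not> W (qs!0) \<subseteq> Z"
    and Ci: "\<And>i V. 0 < i \<Longrightarrow> i < length qs \<Longrightarrow> vec.subspace V \<Longrightarrow> vec.dim V \<le> i \<Longrightarrow> (\<exists>v\<in>V. v \<notin> Z)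
              \<Longrightarrow> \<not> W (qs!i) \<subseteq> V"
    and \<delta>: "\<delta> > 0"
  shows "\<exists>g. (\<forall>p. p \<notin> set qs \<longrightarrow> g p = \<gamma> p) \<and> (\<forall>q\<in>set qs. g q \<in> W q) \<and> (\<forall>p. norm (g p - \<gamma> p) < \<delta>)
           \<and> inj_on g (set qs) \<and> vec.independent (g ` set qs) \<and> (\<forall>L'\<in>F. good g L')"
proof -
  define P where "P k g \<longleftrightarrow> (\<forall>p. p \<notin> set (take k qs) \<longrightarrow> g p = \<gamma> p) \<and> (\<forall>q\<in>set (take k qs). g q \<in> W q)
      \<and> (\<forall>p. norm (g p - \<gamma> p) < \<delta>) \<and> inj_on g (set (take k qs)) \<and> vec.independent (g ` set (take k qs))
      \<and> (\<forall>L'\<in>F. good g L') \<and> (0 < k \<longrightarrow> g (qs!0) \<notin> Z)" for k g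
  have "k \<le> length qs \<Longrightarrow> \<exists>g. P k g" for k
  proof (induction k)
    case 0
    show ?case by (rule exI[of _ \<gamma>]) (use F \<delta> in \<open>simp add: P_def vec.independent_empty\<close>)
  next
    case (Suc k)
    then obtain g where g: "P k g" by auto
    have kl: "k < length qs" using Suc.prems by simp
    define q where "q = qs!k"
    define prev where "prev = set (take k qs)"
    have setS: "set (take (Suc k) qs) = insert q prev"
      unfolding q_def prev_def using kl by (simp add: take_Suc_conv_app_nth)
    have qprev: "q \<notin> prev"
    proof -
      have "distinct (take (Suc k) qs)" using Dq by simp
      then show ?thesis unfolding q_def prev_def using kl by (simp add: take_Suc_conv_app_nth)
    qed
    have qset: "q \<in> set qs" unfolding q_def using kl by simp
    have gq: "g q = \<gamma> q" using g qprev unfolding P_def prev_def by blast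
    have gqW: "g q \<in> W q" using gq Wg qset by simp
    define Sw where "Sw L' = (SOME S. S \<subseteq> L' \<and> card S = CARD('n) - 1 \<and> inj_on g S \<and> vec.independent (g ` S))" for L'
    have Sw: "Sw L' \<subseteq> L' \<and> card (Sw L') = CARD('n) - 1 \<and> inj_on g (Sw L') \<and> vec.independent (g ` Sw L')"
      if "L' \<in> F" for L'
    proof -
      have "good g L'" using g that unfolding P_def by blast
      then obtain S where "S \<subseteq> L' \<and> card S = CARD('n) - 1 \<and> inj_on g S \<and> vec.independent (g ` S)"
        unfolding good_def by blast
      then show ?thesis unfolding Sw_def by (rule someI)
    qed
    define Vs where "Vs = {vec.span (g ` prev)} \<union> (if k = 0 then {Z} else {})
        \<union> ((\<lambda>L'. vec.span (g ` (Sw L' - {q}))) ` {L'\<in>F. q \<in> Sw L'})"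
    have fVs: "finite Vs" unfolding Vs_def using F(1) by simp
    have Vs_ok: "\<forall>V\<in>Vs. vec.subspace V \<and> \<not> W q \<subseteq> V"
    proof
      fix V assume V: "V \<in> Vs"
      consider (a) "V = vec.span (g ` prev)" | (b) "k = 0" "V = Z"
        | (c) L' where "L' \<in> F" "q \<in> Sw L'" "V = vec.span (g ` (Sw L' - {q}))"
        using V unfolding Vs_def by (auto split: if_splits)
      then show "vec.subspace V \<and> \<not> W q \<subseteq> V"
      proof cases
        case a
        have sV: "vec.subspace V" using a by simp
        show ?thesis
        proof (cases "k = 0")
          case True
          then have "V = {0}" using a unfolding prev_def by (simp add: vec.span_empty)
          moreover have "\<not> W q \<subseteq> Z" using Z0 True kl unfolding q_def by auto
          moreover have "0 \<in> Z" using Zs vec.subspace_0 by blast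
          ultimately show ?thesis using sV by blast
        next
          case False
          have fp: "finite (g ` prev)" unfolding prev_def by simp
          have "card (g ` prev) \<le> card prev" unfolding prev_def by (rule card_image_le) simp
          also have "\<dots> \<le> k" unfolding prev_def using card_length[of "take k qs"] by simp
          finally have "vec.dim V \<le> k" using vec.dim_le_card[of V "g ` prev"] fp a by simp
          moreover have "\<exists>v\<in>V. v \<notin> Z"
          proof -
            have "qs!0 \<in> prev"
            proof -
              have "take k qs ! 0 \<in> set (take k qs)" using False kl by (intro nth_mem) simp
              moreover have "take k qs ! 0 = qs ! 0" using False by simp
              ultimately show ?thesis unfolding prev_def by simp
            qed
            then have "g (qs!0) \<in> g ` prev" by blast
            then have "g (qs!0) \<in> V" unfolding a by (rule vec.span_base)
            moreover have "g (qs!0) \<notin> Z" using g False unfolding P_def by blast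
            ultimately show ?thesis by blast
          qed
          ultimately have "\<not> W (qs!k) \<subseteq> V" using Ci[of k V] False kl sV by simp
          then show ?thesis using sV unfolding q_def by simp
        qed
      next
        case b
        then show ?thesis using Zs Z0 kl unfolding q_def by auto
      next
        case c
        have "g q \<notin> V" using c notin_span_other[of g "Sw L'" q] Sw[OF c(1)] by blast
        then show ?thesis using c gqW by auto
      qed
    qed
    obtain y where y: "y \<in> W q" "norm (y - g q) < \<delta>" "\<forall>V\<in>Vs. y \<notin> V"
      using avoid[OF fVs Vs_ok _ gqW \<delta>] Wsub by blast
    define g' where "g' = g(q := y)"
    have "P (Suc k) g'"
      unfolding P_def
    proof (intro conjI allI impI ballI)
      fix p assume "p \<notin> set (take (Suc k) qs)"
      then show "g' p = \<gamma> p" using g unfolding setS g'_def P_def prev_def by auto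
    next
      fix p assume "p \<in> set (take (Suc k) qs)"
      then show "g' p \<in> W p" using g y(1) unfolding setS g'_def P_def prev_def by auto
    next
      fix p show "norm (g' p - \<gamma> p) < \<delta>" using g y(2) gq unfolding g'_def P_def by auto
    next
      have ynot: "y \<notin> vec.span (g ` prev)" using y(3) unfolding Vs_def by blast
      have gp: "g' ` prev = g ` prev" unfolding g'_def using qprev by auto
      have "inj_on g prev" using g unfolding P_def prev_def by blast
      moreover have "inj_on g' prev = inj_on g prev" by (rule inj_on_cong) (use qprev in \<open>auto simp: g'_def\<close>)
      ultimately have injp: "inj_on g' prev" by simp
      have indp: "vec.independent (g ` prev)" using g unfolding P_def prev_def by blast
      have "y \<notin> g' ` prev"
      proof
        assume "y \<in> g' ` prev"
        then have "y \<in> vec.span (g ` prev)" unfolding gp by (rule vec.span_base)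
        then show False using ynot by simp
      qed
      then show "inj_on g' (set (take (Suc k) qs))" unfolding setS using injp
        by (simp add: inj_on_insert qprev g'_def)
      have "g' ` insert q prev = insert (g' q) (g' ` prev)" by simp
      also have "\<dots> = insert y (g ` prev)" using gp by (simp add: g'_def)
      finally have "g' ` insert q prev = insert y (g ` prev)" .
      then show "vec.independent (g' ` set (take (Suc k) qs))" unfolding setS
        using vec.independent_insertI[OF ynot indp] by simp
    next
      fix L' assume L': "L' \<in> F"
      have S: "Sw L' \<subseteq> L'" "card (Sw L') = CARD('n) - 1" "inj_on g (Sw L')" "vec.independent (g ` Sw L')"
        using Sw[OF L'] by auto
      show "good g' L'"
      proof (cases "q \<in> Sw L'")
        case True
        have "y \<notin> vec.span (g ` (Sw L' - {q}))" using y(3) L' True unfolding Vs_def by blast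
        then have "inj_on g' (Sw L') \<and> vec.independent (g' ` Sw L')"
          unfolding g'_def using exch[OF S(3) S(4) True] by blast
        then show ?thesis unfolding good_def using S by blast
      next
        case False
        then have "\<forall>p\<in>Sw L'. g' p = g p" unfolding g'_def by auto
        then have "inj_on g' (Sw L')" "g' ` Sw L' = g ` Sw L'" using S(3) inj_on_cong[of "Sw L'" g' g] by auto
        then show ?thesis unfolding good_def using S by metis
      qed
    next
      assume "0 < Suc k"
      show "g' (qs!0) \<notin> Z"
      proof (cases "k = 0")
        case True
        then have "q = qs!0" unfolding q_def by simp
        moreover have "y \<notin> Z" using y(3) True unfolding Vs_def by auto
        ultimately show ?thesis unfolding g'_def by simp
      next
        case False
        have "qs!0 \<in> prev" unfolding prev_def
        proof -
          have "take k qs ! 0 \<in> set (take k qs)" using False kl by (intro nth_mem) simp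
          moreover have "take k qs ! 0 = qs ! 0" using False by simp
          ultimately show "qs!0 \<in> set (take k qs)" by simp
        qed
        then have "qs!0 \<noteq> q" using qprev by blast
        then show ?thesis using g False unfolding g'_def P_def by simp
      qed
    qed
    then show ?case by blast
  qed
  then obtain g where "P (length qs) g" by blast
  then have "(\<forall>p. p \<notin> set qs \<longrightarrow> g p = \<gamma> p) \<and> (\<forall>q\<in>set qs. g q \<in> W q) \<and> (\<forall>p. norm (g p - \<gamma> p) < \<delta>)
           \<and> inj_on g (set qs) \<and> vec.independent (g ` set qs) \<and> (\<forall>L'\<in>F. good g L')" unfolding P_def by simp
  then show ?thesis by (rule exI[of _ g])
qed

definition Wof :: "nat set \<Rightarrow> nat set set \<Rightarrow> (nat set \<Rightarrow> (complex ^ 'n) set) \<Rightarrow> nat \<Rightarrow> (complex ^ 'n) set" where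
  "Wof E Ind Hf q = (\<Inter>L'\<in>{L'. dependent_hyperplane E Ind L' \<and> q \<in> L'}. Hf L')"

lemma Wof_subspace:
  assumes "\<And>L'. dependent_hyperplane E Ind L' \<Longrightarrow> vec.subspace (Hf L')"
  shows "vec.subspace (Wof E Ind Hf q)"
  unfolding Wof_def by (rule vec.subspace_Int) (use assms in blast)

lemma Wof_sub:
  assumes "dependent_hyperplane E Ind L'" "q \<in> L'"
  shows "Wof E Ind Hf q \<subseteq> Hf L'"
  unfolding Wof_def using assms by blast

lemma Wof_mem:
  assumes "\<And>L'. dependent_hyperplane E Ind L' \<Longrightarrow> q \<in> L' \<Longrightarrow> v \<in> Hf L'"
  shows "v \<in> Wof E Ind Hf q"
  unfolding Wof_def using assms by blast

lemma core_from_Hf: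
  fixes \<gamma> :: "nat \<Rightarrow> complex ^ 'n"
  assumes M: "matroid E Ind" and P: "paving E Ind" and R: "matroid_rank Ind = CARD('n)"
    and F: "finite F" "\<forall>L'\<in>F. good \<gamma> L'"
    and L: "dependent_hyperplane E Ind L"
    and Hs: "\<And>L'. dependent_hyperplane E Ind L' \<Longrightarrow> vec.subspace (Hf L') \<and> vec.dim (Hf L') = CARD('n) - 1"
    and Hg: "\<And>L' p. dependent_hyperplane E Ind L' \<Longrightarrow> p \<in> L' \<Longrightarrow> \<gamma> p \<in> Hf L'"
    and Dq: "distinct qs" "set qs \<subseteq> L" "length qs = CARD('n) - 1"
    and Zs: "vec.subspace Z" and Z0: "qs \<noteq> [] \<Longrightarrow> \<not> Wof E Ind Hf (qs!0) \<subseteq> Z"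
    and Ci: "\<And>i V. 0 < i \<Longrightarrow> i < length qs \<Longrightarrow> vec.subspace V \<Longrightarrow> vec.dim V \<le> i \<Longrightarrow> (\<exists>v\<in>V. v \<notin> Z)
              \<Longrightarrow> \<not> Wof E Ind Hf (qs!i) \<subseteq> V"
    and \<delta>: "\<delta> > 0"
  shows "\<exists>\<gamma>'\<in>circuit_variety E Ind. (\<forall>p. norm (\<gamma>' p - \<gamma> p) < \<delta>) \<and> (\<forall>L'\<in>F. good \<gamma>' L') \<and> good \<gamma>' L"
proof -
  let ?W = "Wof E Ind Hf"
  have Wsub: "\<forall>q. vec.subspace (?W q)" using Wof_subspace Hs by blast
  have Wg: "\<forall>q\<in>set qs. \<gamma> q \<in> ?W q" using Hg by (blast intro: Wof_mem)
  obtain g where g: "\<forall>p. p \<notin> set qs \<longrightarrow> g p = \<gamma> p" "\<forall>q\<in>set qs. g q \<in> ?W q" "\<forall>p. norm (g p - \<gamma> p) < \<delta>"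
     "inj_on g (set qs)" "vec.independent (g ` set qs)" "\<forall>L'\<in>F. good g L'"
    using greedy[OF F Wsub Wg Dq(1) Zs Z0 Ci \<delta>] by blast
  have var: "g \<in> circuit_variety E Ind"
  proof (rule variety_intro[OF M P R])
    fix L' assume L': "dependent_hyperplane E Ind L'"
    have "g ` L' \<subseteq> Hf L'"
    proof
      fix v assume "v \<in> g ` L'"
      then obtain p where p: "p \<in> L'" "v = g p" by blast
      show "v \<in> Hf L'"
      proof (cases "p \<in> set qs")
        case True
        then have "g p \<in> ?W p" using g(2) by blast
        then show ?thesis using Wof_sub[OF L' p(1)] p(2) by blast
      next
        case False
        then show ?thesis using g(1) Hg[OF L' p(1)] p(2) by simp
      qed
    qed
    moreover have "vec.dim (Hf L') \<le> CARD('n) - 1" using Hs[OF L'] by simp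
    ultimately show "\<exists>H. vec.dim H \<le> CARD('n) - 1 \<and> g ` L' \<subseteq> H" by blast
  qed
  have "card (set qs) = CARD('n) - 1" using Dq by (simp add: distinct_card)
  then have "good g L" unfolding good_def using Dq(2) g(4,5) by (intro exI[of _ "set qs"]) auto
  then show ?thesis using var g(3,6) by (intro bexI[of _ g]) auto
qed

lemma tame_unique:
  assumes T: "tame E Ind" and L: "dependent_hyperplane E Ind L" "q \<in> L"
    and L1: "dependent_hyperplane E Ind L1" "q \<in> L1" "L1 \<noteq> L"
    and L2: "dependent_hyperplane E Ind L2" "q \<in> L2" "L2 \<noteq> L"
  shows "L1 = L2"
proof (rule ccontr)
  assume "L1 \<noteq> L2"
  then have "L \<inter> L1 \<inter> L2 = {}"
    using T[unfolded tame_def, rule_format, of L L1 L2] L(1) L1 L2 by simp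
  then show False using L(2) L1(2) L2(2) by blast
qed

lemma dim_int:
  fixes A B :: "(complex ^ 'n) set"
  assumes "vec.subspace A" "vec.subspace B" "vec.dim A = CARD('n) - 1" "vec.dim B = CARD('n) - 1"
  shows "vec.dim (A \<inter> B) \<ge> CARD('n) - 2"
proof -
  have e: "vec.dim {x + y |x y. x \<in> A \<and> y \<in> B} + vec.dim (A \<inter> B) = vec.dim A + vec.dim B"
    by (rule vec.dim_sums_Int[OF assms(1,2)])
  have "vec.dim {x + y |x y. x \<in> A \<and> y \<in> B} \<le> vec.dim (UNIV :: (complex ^ 'n) set)"
    by (rule vec.dim_subset) simp
  then have "vec.dim {x + y |x y. x \<in> A \<and> y \<in> B} \<le> CARD('n)" using dim_univ[where 'n='n] by simp
  then show ?thesis using e assms(3,4) by linarith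
qed

lemma dim_Wof:
  fixes Hf :: "nat set \<Rightarrow> (complex ^ 'n) set"
  assumes T: "tame E Ind" and L: "dependent_hyperplane E Ind L" "q \<in> L"
    and Hs: "\<And>L'. dependent_hyperplane E Ind L' \<Longrightarrow> vec.subspace (Hf L') \<and> vec.dim (Hf L') = CARD('n) - 1"
  shows "vec.dim (Wof E Ind Hf q) \<ge> CARD('n) - 2"
proof (cases "\<exists>L'. dependent_hyperplane E Ind L' \<and> q \<in> L' \<and> L' \<noteq> L")
  case True
  then obtain L' where L': "dependent_hyperplane E Ind L'" "q \<in> L'" "L' \<noteq> L" by blast
  have "{L''. dependent_hyperplane E Ind L'' \<and> q \<in> L''} = {L, L'}"
    using tame_unique[OF T L L'] L L' by blast
  then have "Wof E Ind Hf q = Hf L \<inter> Hf L'" unfolding Wof_def by simp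
  moreover have "vec.dim (Hf L \<inter> Hf L') \<ge> CARD('n) - 2"
    using Hs[OF L(1)] Hs[OF L'(1)] by (intro dim_int) auto
  ultimately show ?thesis by simp
next
  case False
  then have "{L''. dependent_hyperplane E Ind L'' \<and> q \<in> L''} = {L}" using L by blast
  then have "Wof E Ind Hf q = Hf L" unfolding Wof_def by simp
  then show ?thesis using Hs[OF L(1)] by simp
qed

lemma core_step:
  fixes \<gamma> :: "nat \<Rightarrow> complex ^ 'n"
  assumes M: "matroid E Ind" and P: "paving E Ind" and R: "matroid_rank Ind = CARD('n)" and T: "tame E Ind"
    and g: "\<gamma> \<in> circuit_variety E Ind"
    and F: "finite F" "\<forall>L'\<in>F. good \<gamma> L'"
    and L: "dependent_hyperplane E Ind L"
    and \<delta>: "\<delta> > 0"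
  shows "\<exists>\<gamma>'\<in>circuit_variety E Ind. (\<forall>p. norm (\<gamma>' p - \<gamma> p) < \<delta>) \<and> (\<forall>L'\<in>F. good \<gamma>' L') \<and> good \<gamma>' L"
proof (cases "CARD('n) = 1")
  case True
  have "good \<gamma> L" unfolding good_def using True by (intro exI[of _ "{}"]) (simp add: vec.independent_empty)
  then show ?thesis using g F \<delta> by (intro bexI[of _ \<gamma>]) auto
next
  case False
  have "CARD('n) > 0" by (rule zero_less_card_finite)
  then have n2: "CARD('n) \<ge> 2" using False by linarith
  have Hb: "\<exists>H. vec.subspace H \<and> vec.dim H = CARD('n) - 1 \<and> \<gamma> ` L' \<subseteq> H"
    if "dependent_hyperplane E Ind L'" for L'
    using ext_subspace[OF dim_hyp_le[OF M R g that]] .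
  define Hbase where "Hbase L' = (SOME H. vec.subspace H \<and> vec.dim H = CARD('n) - 1 \<and> \<gamma> ` L' \<subseteq> H)" for L'
  have Hbase: "vec.subspace (Hbase L') \<and> vec.dim (Hbase L') = CARD('n) - 1 \<and> \<gamma> ` L' \<subseteq> Hbase L'"
    if hL: "dependent_hyperplane E Ind L'" for L'
  proof -
    obtain H where "vec.subspace H \<and> vec.dim H = CARD('n) - 1 \<and> \<gamma> ` L' \<subseteq> H" using Hb[OF hL] by blast
    then show ?thesis unfolding Hbase_def by (rule someI)
  qed
  have "finite E" using M unfolding matroid_def by simp
  then have fL: "finite L" using hyp_props(1)[OF L] finite_subset by auto
  have cL: "card L \<ge> CARD('n)" using hyp_props(2)[OF L] R by simp
  show ?thesis
  proof (cases "\<exists>q0\<in>L. \<exists>H0. vec.subspace H0 \<and> vec.dim H0 = CARD('n) - 1 \<and>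
                 (\<forall>L'. dependent_hyperplane E Ind L' \<and> q0 \<in> L' \<longrightarrow> \<gamma> ` L' \<subseteq> H0)")
    case True
    then obtain q0 where q0: "q0 \<in> L" and ex: "\<exists>H0. vec.subspace H0 \<and> vec.dim H0 = CARD('n) - 1 \<and>
                 (\<forall>L'. dependent_hyperplane E Ind L' \<and> q0 \<in> L' \<longrightarrow> \<gamma> ` L' \<subseteq> H0)" by (rule bexE)
    then obtain H0 where H0: "vec.subspace H0" "vec.dim H0 = CARD('n) - 1"
      and H0a: "\<forall>L'. dependent_hyperplane E Ind L' \<and> q0 \<in> L' \<longrightarrow> \<gamma> ` L' \<subseteq> H0" by (elim exE conjE)
    have H0g: "\<And>L'. dependent_hyperplane E Ind L' \<Longrightarrow> q0 \<in> L' \<Longrightarrow> \<gamma> ` L' \<subseteq> H0" using H0a by simp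
    define Hf where "Hf L' = (if q0 \<in> L' then H0 else Hbase L')" for L'
    have Hs: "vec.subspace (Hf L') \<and> vec.dim (Hf L') = CARD('n) - 1" if "dependent_hyperplane E Ind L'" for L'
      using H0 Hbase[OF that] by (simp add: Hf_def)
    have Hg: "\<gamma> p \<in> Hf L'" if "dependent_hyperplane E Ind L'" "p \<in> L'" for L' p
    proof (cases "q0 \<in> L'")
      case True then show ?thesis using H0g[OF that(1) True] that(2) by (auto simp: Hf_def)
    next
      case False then show ?thesis using Hbase[OF that(1)] that(2) by (auto simp: Hf_def)
    qed
    have Wq0: "Wof E Ind Hf q0 = H0"
    proof
      show "Wof E Ind Hf q0 \<subseteq> H0" using Wof_sub[OF L q0, of Hf] q0 by (simp add: Hf_def)
      show "H0 \<subseteq> Wof E Ind Hf q0" unfolding Wof_def Hf_def by auto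
    qed
    have dimW: "vec.dim (Wof E Ind Hf q) \<ge> CARD('n) - 2" if "q \<in> L" for q
      using dim_Wof[OF T L that Hs] .
    have "card (L - {q0}) = card L - 1" using fL q0 by simp
    then have "card (L - {q0}) \<ge> CARD('n) - 2" using cL by linarith
    then obtain Rs where Rs: "Rs \<subseteq> L - {q0}" "card Rs = CARD('n) - 2" "finite Rs"
      using obtain_subset_with_card_n by metis
    define xs where "xs = sorted_list_of_set Rs"
    have xs: "distinct xs" "set xs = Rs" "length xs = CARD('n) - 2" using Rs unfolding xs_def by auto
    define qs where "qs = xs @ [q0]"
    have qs: "distinct qs" "set qs \<subseteq> L" "length qs = CARD('n) - 1"
      unfolding qs_def using xs Rs q0 n2 by auto
    have key: "vec.dim (Wof E Ind Hf (qs!i)) \<ge> i + 1" if "i < length qs" for i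
    proof (cases "i < length xs")
      case True
      then have "qs!i = xs!i" unfolding qs_def by (simp add: nth_append)
      moreover have "xs!i \<in> L" using True xs Rs nth_mem by blast
      ultimately show ?thesis using dimW True xs(3) by fastforce
    next
      case False
      then have "i = length xs" using that unfolding qs_def by simp
      then have "qs!i = q0" unfolding qs_def by simp
      then show ?thesis using Wq0 H0 \<open>i = length xs\<close> xs(3) n2 by simp
    qed
    show ?thesis
    proof (rule core_from_Hf[OF M P R F L Hs Hg qs, where Z = "{0}"])
      show "vec.subspace {0::complex ^ 'n}" by simp
      assume "qs \<noteq> []"
      then have "vec.dim (Wof E Ind Hf (qs!0)) \<ge> 1" using key[of 0] by simp
      then show "\<not> Wof E Ind Hf (qs!0) \<subseteq> {0}" using vec.dim_eq_0 by (metis not_one_le_zero)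
    next
      fix i and V :: "(complex ^ 'n) set" assume i: "0 < i" "i < length qs" and V: "vec.subspace V" "vec.dim V \<le> i"
      show "\<not> Wof E Ind Hf (qs!i) \<subseteq> V"
      proof
        assume "Wof E Ind Hf (qs!i) \<subseteq> V"
        then have "vec.dim (Wof E Ind Hf (qs!i)) \<le> vec.dim V" by (rule vec.dim_subset)
        then show False using key[OF i(2)] V(2) by linarith
      qed
    qed (use \<delta> in auto)
  next
    case False
    define Hf where "Hf = Hbase"
    have Hs: "vec.subspace (Hf L') \<and> vec.dim (Hf L') = CARD('n) - 1" if "dependent_hyperplane E Ind L'" for L'
      using Hbase[OF that] by (simp add: Hf_def)
    have Hg: "\<gamma> p \<in> Hf L'" if "dependent_hyperplane E Ind L'" "p \<in> L'" for L' p
      using Hbase[OF that(1)] that(2) by (auto simp: Hf_def)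
    let ?W = "Wof E Ind Hf"
    have dimW: "vec.dim (?W q) \<ge> CARD('n) - 2" if "q \<in> L" for q
      using dim_Wof[OF T L that Hs] .
    have Wsub: "vec.subspace (?W q)" for q using Wof_subspace Hs by blast
    have "\<exists>q1\<in>L. \<exists>q2\<in>L. \<not> ?W q1 \<subseteq> ?W q2"
    proof (rule ccontr)
      assume "\<not> ?thesis"
      then have all: "?W q1 \<subseteq> ?W q2" if "q1 \<in> L" "q2 \<in> L" for q1 q2 using that by blast
      have "L \<noteq> {}" using cL n2 by auto
      then obtain q where q: "q \<in> L" by blast
      obtain L0 where L0: "dependent_hyperplane E Ind L0" "q \<in> L0"
        and L0u: "\<And>L'. dependent_hyperplane E Ind L' \<Longrightarrow> q \<in> L' \<Longrightarrow> L' = L \<or> L' = L0"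
      proof (cases "\<exists>L'. dependent_hyperplane E Ind L' \<and> q \<in> L' \<and> L' \<noteq> L")
        case True
        then obtain L1 where L1: "dependent_hyperplane E Ind L1" "q \<in> L1" "L1 \<noteq> L" by blast
        show ?thesis
        proof (rule that[OF L1(1,2)])
          fix L' assume "dependent_hyperplane E Ind L'" "q \<in> L'"
          then show "L' = L \<or> L' = L1" using tame_unique[OF T L q _ _ _ L1] by blast
        qed
      next
        case False
        show ?thesis by (rule that[OF L q]) (use False in blast)
      qed
      have "\<forall>L'. dependent_hyperplane E Ind L' \<and> q \<in> L' \<longrightarrow> \<gamma> ` L' \<subseteq> Hf L0"
      proof (intro allI impI)
        fix L' assume L': "dependent_hyperplane E Ind L' \<and> q \<in> L'"
        show "\<gamma> ` L' \<subseteq> Hf L0"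
        proof (cases "L' = L0")
          case True then show ?thesis using Hg L' by blast
        next
          case False
          then have "L' = L" using L0u L' by blast
          show ?thesis
          proof
            fix v assume "v \<in> \<gamma> ` L'"
            then obtain p where p: "p \<in> L" "v = \<gamma> p" using \<open>L' = L\<close> by blast
            have "\<gamma> p \<in> ?W p" by (rule Wof_mem) (use Hg in blast)
            also have "\<dots> \<subseteq> ?W q" using all[OF p(1) q] .
            also have "\<dots> \<subseteq> Hf L0" by (rule Wof_sub[OF L0])
            finally show "v \<in> Hf L0" using p(2) by simp
          qed
        qed
      qed
      moreover have "vec.subspace (Hf L0)" "vec.dim (Hf L0) = CARD('n) - 1" using Hs[OF L0(1)] by auto
      ultimately show False using False q by blast
    qed
    then obtain q1 q2 where q12: "q1 \<in> L" "q2 \<in> L" "\<not> ?W q1 \<subseteq> ?W q2" by blast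
    then have q1q2: "q1 \<noteq> q2" by blast
    show ?thesis
    proof (cases "CARD('n) = 2")
      case True
      have qs: "distinct [q1]" "set [q1] \<subseteq> L" "length [q1] = CARD('n) - 1" using True q12 by auto
      show ?thesis
        by (rule core_from_Hf[OF M P R F L Hs Hg qs, where Z = "?W q2"]) (use Wsub q12 \<delta> in auto)
    next
      case False
      then have n3: "CARD('n) \<ge> 3" using n2 by linarith
      have "card (L - {q1, q2}) = card L - 2" using fL q12 q1q2 by (simp add: card_Diff_subset)
      then have "card (L - {q1, q2}) \<ge> CARD('n) - 3" using cL by linarith
      then obtain Rs where Rs: "Rs \<subseteq> L - {q1, q2}" "card Rs = CARD('n) - 3" "finite Rs"
        using obtain_subset_with_card_n by metis
      define xs where "xs = sorted_list_of_set Rs"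
      have xs: "distinct xs" "set xs = Rs" "length xs = CARD('n) - 3" using Rs unfolding xs_def by auto
      define qs where "qs = q1 # xs @ [q2]"
      have qs: "distinct qs" "set qs \<subseteq> L" "length qs = CARD('n) - 1"
        unfolding qs_def using xs Rs q12 q1q2 n3 by auto
      show ?thesis
      proof (rule core_from_Hf[OF M P R F L Hs Hg qs, where Z = "?W q2"])
        show "vec.subspace (?W q2)" by (rule Wsub)
        show "\<not> ?W (qs!0) \<subseteq> ?W q2" using q12 unfolding qs_def by simp
      next
        fix i and V :: "(complex ^ 'n) set" assume i: "0 < i" "i < length qs" and V: "vec.subspace V" "vec.dim V \<le> i"
          and v: "\<exists>v\<in>V. v \<notin> ?W q2"
        show "\<not> ?W (qs!i) \<subseteq> V"
        proof (cases "i - 1 < length xs")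
          case True
          then have "qs!i = xs!(i - 1)" unfolding qs_def using i(1) by (simp add: nth_append nth_Cons')
          moreover have "xs!(i - 1) \<in> L" using True xs Rs nth_mem by blast
          ultimately have d: "vec.dim (?W (qs!i)) \<ge> CARD('n) - 2" using dimW by simp
          have "i < CARD('n) - 2" using True xs(3) i(1) by linarith
          then show ?thesis using d V(2) vec.dim_subset by (metis leD le_trans)
        next
          case False
          then have "i - 1 = length xs" using i unfolding qs_def by simp
          then have "qs!i = q2" unfolding qs_def using i(1) by (simp add: nth_Cons')
          moreover have "\<not> ?W q2 \<subseteq> V"
          proof
            assume sub: "?W q2 \<subseteq> V"
            have "vec.dim V \<le> CARD('n) - 2" using V(2) \<open>i - 1 = length xs\<close> xs(3) n3 by linarith
            then have "vec.dim V \<le> vec.dim (?W q2)" using dimW[OF q12(2)] by linarith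
            then have "?W q2 = V" using vec.subspace_dim_equal[OF Wsub V(1) sub] by blast
            then show False using v by blast
          qed
          ultimately show ?thesis by simp
        qed
      qed (use \<delta> in auto)
    qed
  qed
qed

lemma main_ind:
  fixes E :: "nat set"
  assumes M: "matroid E Ind" and P: "paving E Ind" and R: "matroid_rank Ind = CARD('n)" and T: "tame E Ind"
    and F: "finite F" "\<forall>L\<in>F. dependent_hyperplane E Ind L"
  shows "\<forall>\<gamma> \<in> (circuit_variety E Ind :: (nat \<Rightarrow> complex ^ 'n) set). \<forall>\<epsilon>>0. \<exists>\<gamma>'\<in>circuit_variety E Ind.
           (\<forall>p. norm (\<gamma>' p - \<gamma> p) < \<epsilon>) \<and> (\<forall>L\<in>F. good \<gamma>' L)"
  using F
proof (induction F rule: finite_induct)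
  case empty
  show ?case
  proof (intro ballI allI impI)
    fix \<gamma> :: "nat \<Rightarrow> complex ^ 'n" and \<epsilon> :: real
    assume "\<gamma> \<in> circuit_variety E Ind" "\<epsilon> > 0"
    then show "\<exists>\<gamma>'\<in>circuit_variety E Ind. (\<forall>p. norm (\<gamma>' p - \<gamma> p) < \<epsilon>) \<and> (\<forall>L\<in>{}. good \<gamma>' L)"
      by (intro bexI[of _ \<gamma>]) auto
  qed
next
  case (insert L F)
  show ?case
  proof (intro ballI allI impI)
    fix \<gamma> :: "nat \<Rightarrow> complex ^ 'n" and \<epsilon> :: real
    assume g: "\<gamma> \<in> circuit_variety E Ind" and e: "\<epsilon> > 0"
    have e2: "\<epsilon>/2 > 0" using e by simp
    have hF: "\<forall>L\<in>F. dependent_hyperplane E Ind L" using insert.prems by blast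
    have hL: "dependent_hyperplane E Ind L" using insert.prems by blast
    obtain \<gamma>1 where g1: "\<gamma>1 \<in> circuit_variety E Ind" "\<forall>p. norm (\<gamma>1 p - \<gamma> p) < \<epsilon>/2" "\<forall>L\<in>F. good \<gamma>1 L"
      using insert.IH[OF hF] g e2 by blast
    obtain \<gamma>2 where g2: "\<gamma>2 \<in> circuit_variety E Ind" "\<forall>p. norm (\<gamma>2 p - \<gamma>1 p) < \<epsilon>/2"
        "\<forall>L'\<in>F. good \<gamma>2 L'" "good \<gamma>2 L"
      using core_step[OF M P R T g1(1) insert.hyps(1) g1(3) hL e2] by blast
    have "\<forall>p. norm (\<gamma>2 p - \<gamma> p) < \<epsilon>"
    proof
      fix p
      have "norm (\<gamma>2 p - \<gamma> p) \<le> norm (\<gamma>2 p - \<gamma>1 p) + norm (\<gamma>1 p - \<gamma> p)"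
        by (rule norm_diff_triangle_le[of _ "\<gamma>1 p"]) simp_all
      moreover have "norm (\<gamma>1 p - \<gamma> p) < \<epsilon>/2" using g1(2) by blast
      moreover have "norm (\<gamma>2 p - \<gamma>1 p) < \<epsilon>/2" using g2(2) by blast
      ultimately show "norm (\<gamma>2 p - \<gamma> p) < \<epsilon>" by linarith
    qed
    moreover have "\<forall>L'\<in>insert L F. good \<gamma>2 L'" using g2(3,4) by blast
    ultimately show "\<exists>\<gamma>'\<in>circuit_variety E Ind. (\<forall>p. norm (\<gamma>' p - \<gamma> p) < \<epsilon>) \<and> (\<forall>L'\<in>insert L F. good \<gamma>' L')"
      using g2(1) by blast
  qed
qed

theorem lemma8p3:
  fixes d :: nat and Ind :: "nat set set" and \<gamma> :: "nat \<Rightarrow> complex ^ 'n" and \<epsilon> :: real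
  assumes "matroid {1..d} Ind"
    and "matroid_rank Ind = CARD('n)"
    and "paving {1..d} Ind"
    and "tame {1..d} Ind"
    and "\<gamma> \<in> circuit_variety {1..d} Ind"
    and "\<epsilon> > 0"
  shows "\<exists>\<gamma>' \<in> circuit_variety {1..d} Ind.
           (\<forall>p\<in>{1..d}. norm (\<gamma> p - \<gamma>' p) < \<epsilon>) \<and>
           (\<forall>l. dependent_hyperplane {1..d} Ind l \<longrightarrow> vec.dim (\<gamma>' ` l) = CARD('n) - 1)"
proof -
  let ?F = "{L. dependent_hyperplane {1..d} Ind L}"
  have "finite ?F" by (rule finite_hyps[OF assms(1)])
  then obtain \<gamma>' where g': "\<gamma>' \<in> circuit_variety {1..d} Ind" "\<forall>p. norm (\<gamma>' p - \<gamma> p) < \<epsilon>"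
      "\<forall>L\<in>?F. good \<gamma>' L"
    using main_ind[OF assms(1,3,2,4), of ?F] assms(5,6) by blast
  have "vec.dim (\<gamma>' ` l) = CARD('n) - 1" if l: "dependent_hyperplane {1..d} Ind l" for l
  proof (rule antisym)
    show "vec.dim (\<gamma>' ` l) \<le> CARD('n) - 1" by (rule dim_hyp_le[OF assms(1,2) g'(1) l])
    have "good \<gamma>' l" using g'(3) l by blast
    then obtain S where S: "S \<subseteq> l" "card S = CARD('n) - 1" "inj_on \<gamma>' S" "vec.independent (\<gamma>' ` S)"
      unfolding good_def by blast
    have "card (\<gamma>' ` S) \<le> vec.dim (\<gamma>' ` l)"
      by (rule vec.independent_card_le_dim) (use S in auto)
    then show "CARD('n) - 1 \<le> vec.dim (\<gamma>' ` l)" using card_image[OF S(3)] S(2) by simp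
  qed
  moreover have "\<forall>p\<in>{1..d}. norm (\<gamma> p - \<gamma>' p) < \<epsilon>" using g'(2) by (simp add: norm_minus_commute)
  ultimately show ?thesis using g'(1) by blast
qed

end
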